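(* Let $(z_1,\dots,z_n)$ be coordinates on $\mathbb{R}^n$ and let $g$ be a pseudo-Riemannian metric on $\mathbb{R}^n$ whose Levi-Civita connection satisfies, for all $a,b$, $$\nabla_{\partial_a^z}\partial_b^z=\sum_{c>\max(a,b)}\Gamma_{ab}{}^c(z_1,\dots,z_{c-1})\,\partial_c^z,$$ i.e. $\nabla_{\partial_a^z}\partial_b^z$ has components only in directions $\partial_c^z$ with $c>a$ and $c>b$, and the coefficient $\Gamma_{ab}{}^c$ depends only on $z_1,\dots,z_{c-1}$. Then: (1) $(\mathbb{R}^n,g)$ is complete, i.e. all geodesics are defined for all time; (2) for every $P\in\mathbb{R}^n$, $\exp_P:T_P\mathbb{R}^n\to\mathbb{R}^n$ is a diffeomorphism.
   Context: $\partial_a^z=\partial/\partial z_a$. *)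

theory Defs
  imports "HOL-Analysis.Analysis"
begin

text \<open>Coordinates z_1,...,z_n on R^n: vectors real^'n, the index type 'n is a finite
  linearly ordered type (the order of the coordinates).\<close>

definition partial_deriv :: "'n::finite \<Rightarrow> (real^'n \<Rightarrow> real) \<Rightarrow> real^'n \<Rightarrow> real" where
  "partial_deriv i f x = deriv (\<lambda>t. f (x + t *\<^sub>R axis i 1)) 0"

fun Ck :: "nat \<Rightarrow> (real^'n::finite \<Rightarrow> real) \<Rightarrow> bool" where
  "Ck 0 f = continuous_on UNIV f"
| "Ck (Suc k) f = (continuous_on UNIV f \<and>
      (\<forall>i x. (\<lambda>t. f (x + t *\<^sub>R axis i 1)) differentiable (at 0)) \<and>
      (\<forall>i. Ck k (partial_deriv i f)))"

definition smooth_fun :: "(real^'n::finite \<Rightarrow> real) \<Rightarrow> bool" where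
  "smooth_fun f \<longleftrightarrow> (\<forall>k. Ck k f)"

definition smooth_map :: "(real^'n::finite \<Rightarrow> real^'m::finite) \<Rightarrow> bool" where
  "smooth_map F \<longleftrightarrow> (\<forall>j. smooth_fun (\<lambda>x. F x $ j))"

definition diffeomorphism :: "(real^'n::finite \<Rightarrow> real^'n) \<Rightarrow> bool" where
  "diffeomorphism F \<longleftrightarrow> bij F \<and> smooth_map F \<and> smooth_map (inv F)"

definition pseudo_riemannian_metric :: "(real^'n::finite \<Rightarrow> real^'n^'n) \<Rightarrow> bool" where
  "pseudo_riemannian_metric g \<longleftrightarrow>
     (\<forall>i j. smooth_fun (\<lambda>z. g z $ i $ j)) \<and>
     (\<forall>z. transpose (g z) = g z \<and> invertible (g z))"

text \<open>Christoffel symbols of the Levi-Civita connection: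
  nabla_{d_a} d_b = sum_c christoffel g c a b * d_c, where
  Gamma_ab^c = 1/2 g^{cd} (d_a g_{bd} + d_b g_{ad} - d_d g_{ab}).\<close>
definition christoffel :: "(real^'n::finite \<Rightarrow> real^'n^'n) \<Rightarrow> 'n \<Rightarrow> 'n \<Rightarrow> 'n \<Rightarrow> real^'n \<Rightarrow> real" where
  "christoffel g c a b z = (1/2) * (\<Sum>d\<in>UNIV. matrix_inv (g z) $ c $ d *
      (partial_deriv a (\<lambda>w. g w $ b $ d) z + partial_deriv b (\<lambda>w. g w $ a $ d) z
       - partial_deriv d (\<lambda>w. g w $ a $ b) z))"

definition is_geodesic :: "(real^'n::finite \<Rightarrow> real^'n^'n) \<Rightarrow> real set \<Rightarrow> (real \<Rightarrow> real^'n) \<Rightarrow> bool" where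
  "is_geodesic g I \<gamma> \<longleftrightarrow> open I \<and> is_interval I \<and>
     (\<exists>\<gamma>' \<gamma>''. \<forall>t\<in>I. (\<gamma> has_vector_derivative \<gamma>' t) (at t) \<and>
        (\<gamma>' has_vector_derivative \<gamma>'' t) (at t) \<and>
        (\<forall>c. \<gamma>'' t $ c + (\<Sum>a\<in>UNIV. \<Sum>b\<in>UNIV. christoffel g c a b (\<gamma> t) * \<gamma>' t $ a * \<gamma>' t $ b) = 0))"

definition geodesically_complete :: "(real^'n::finite \<Rightarrow> real^'n^'n) \<Rightarrow> bool" where
  "geodesically_complete g \<longleftrightarrow>
     (\<forall>I \<gamma>. is_geodesic g I \<gamma> \<longrightarrow> (\<exists>\<delta>. is_geodesic g UNIV \<delta> \<and> (\<forall>t\<in>I. \<delta> t = \<gamma> t)))"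

text \<open>Exponential map at P: exp_P v = gamma(1) for the geodesic with gamma(0)=P, gamma'(0)=v
  (T_P R^n identified with R^n).\<close>
definition exp_map :: "(real^'n::finite \<Rightarrow> real^'n^'n) \<Rightarrow> real^'n \<Rightarrow> real^'n \<Rightarrow> real^'n" where
  "exp_map g P v = (THE q. \<exists>I \<gamma>. {0..1} \<subseteq> I \<and> is_geodesic g I \<gamma> \<and> \<gamma> 0 = P \<and>
       vector_derivative \<gamma> (at 0) = v \<and> \<gamma> 1 = q)"

end

theory Submission
  imports Defs
begin

definition pdir :: "'a::euclidean_space \<Rightarrow> ('a \<Rightarrow> real) \<Rightarrow> 'a \<Rightarrow> real" where
  "pdir i f x = deriv (\<lambda>t. f (x + t *\<^sub>R i)) 0"

lemma line_has_derivative: "((\<lambda>t::real. x + t *\<^sub>R i) has_derivative (\<lambda>t. t *\<^sub>R i)) (at t0)"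
  by (rule derivative_eq_intros refl | simp)+

lemma pdir_field:
  assumes "(f has_derivative L) (at x)"
  shows "((\<lambda>t. f (x + t *\<^sub>R i)) has_field_derivative L i) (at 0)"
proof -
  have "((\<lambda>t. f (x + t *\<^sub>R i)) has_derivative (\<lambda>t. L (t *\<^sub>R i))) (at 0)"
    using has_derivative_compose[OF line_has_derivative[of x i 0]] assms by simp
  moreover have "(\<lambda>t. L (t *\<^sub>R i)) = (\<lambda>t. L i * t)"
    using has_derivative_linear[OF assms] by (simp add: linear_scale mult.commute)
  ultimately show ?thesis
    by (simp add: has_field_derivative_def)
qed

lemma pdir_has:
  assumes "(f has_derivative L) (at x)"
  shows "pdir i f x = L i"
  unfolding pdir_def by (rule DERIV_imp_deriv[OF pdir_field[OF assms]])

lemma linear_basis_expand: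
  assumes "linear L"
  shows "L h = (\<Sum>i\<in>Basis. (h \<bullet> i) * L i)"
proof -
  have "L h = L (\<Sum>i\<in>Basis. (h \<bullet> i) *\<^sub>R i)" by (simp add: euclidean_representation)
  also have "\<dots> = (\<Sum>i\<in>Basis. (h \<bullet> i) * L i)"
    using assms by (simp add: linear_sum linear_scale)
  finally show ?thesis .
qed

lemma differentiable_pdir:
  assumes "f differentiable (at x)"
  shows "(f has_derivative (\<lambda>h. \<Sum>i\<in>Basis. (h \<bullet> i) * pdir i f x)) (at x)"
proof -
  from assms obtain L where L: "(f has_derivative L) (at x)"
    by (auto simp: differentiable_def)
  have "L h = (\<Sum>i\<in>Basis. (h \<bullet> i) * pdir i f x)" for h
    unfolding pdir_has[OF L] by (rule linear_basis_expand[OF has_derivative_linear[OF L]])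
  then have "L = (\<lambda>h. \<Sum>i\<in>Basis. (h \<bullet> i) * pdir i f x)" by (rule ext)
  with L show ?thesis by simp
qed

lemma differentiable_pdir_field:
  assumes "f differentiable (at x)"
  shows "((\<lambda>t. f (x + t *\<^sub>R i)) has_field_derivative pdir i f x) (at 0)"
proof -
  from assms obtain L where L: "(f has_derivative L) (at x)"
    by (auto simp: differentiable_def)
  show ?thesis unfolding pdir_has[OF L] by (rule pdir_field[OF L])
qed

fun CK :: "nat \<Rightarrow> ('a::euclidean_space \<Rightarrow> real) \<Rightarrow> bool" where
  "CK 0 f = continuous_on UNIV f"
| "CK (Suc k) f = ((\<forall>x. f differentiable (at x)) \<and> (\<forall>i\<in>Basis. CK k (pdir i f)))"

lemma CK_cont: "CK k f \<Longrightarrow> continuous_on UNIV f"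
proof (cases k)
  case (Suc m)
  assume "CK k f"
  then have "\<forall>x. f differentiable (at x)" using Suc by simp
  then show ?thesis
    by (intro continuous_at_imp_continuous_on ballI differentiable_imp_continuous_within) blast
qed simp

lemma CK_mono: "CK (Suc k) f \<Longrightarrow> CK k f"
proof (induction k arbitrary: f)
  case 0 then have "continuous_on UNIV f" by (rule CK_cont) then show ?case by simp
next
  case (Suc k) then show ?case by simp
qed

lemma CK_le: "CK m f \<Longrightarrow> k \<le> m \<Longrightarrow> CK k f"
proof (induction m arbitrary: k)
  case 0 then show ?case by simp
next
  case (Suc m) then show ?case using CK_mono le_Suc_eq by blast
qed

lemma CK_diff: "CK (Suc k) f \<Longrightarrow> (f has_derivative (\<lambda>h. \<Sum>i\<in>Basis. (h \<bullet> i) * pdir i f x)) (at x)"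
  using differentiable_pdir[of f x] by (simp only: CK.simps)

lemma CK_pdir: "CK (Suc k) f \<Longrightarrow> i \<in> Basis \<Longrightarrow> CK k (pdir i f)"
  by simp

lemma CK_SucI:
  assumes "\<And>x. (f has_derivative (\<lambda>h. \<Sum>i\<in>Basis. (h \<bullet> i) * D i x)) (at x)"
    and "\<And>i. i \<in> Basis \<Longrightarrow> CK k (D i)"
  shows "CK (Suc k) f"
proof -
  have "pdir i f = D i" if "i \<in> Basis" for i
  proof
    fix x
    have "pdir i f x = (\<Sum>j\<in>Basis. (i \<bullet> j) * D j x)" by (rule pdir_has[OF assms(1)])
    also have "\<dots> = (\<Sum>j\<in>Basis. (if j = i then D i x else 0))"
      using that by (intro sum.cong refl) (simp add: inner_Basis)
    also have "\<dots> = D i x" using that by simp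
    finally show "pdir i f x = D i x" .
  qed
  moreover have "\<forall>x. f differentiable (at x)" using assms(1) by (blast intro: differentiableI)
  ultimately show ?thesis using assms(2) by simp
qed

lemma CK_const: "CK k (\<lambda>x. c)"
proof (induction k arbitrary: c)
  case 0 then show ?case by (simp add: continuous_on_const)
next
  case (Suc k)
  show ?case
  proof (rule CK_SucI[where D="\<lambda>i x. 0"])
    fix x show "((\<lambda>x. c) has_derivative (\<lambda>h. \<Sum>i\<in>Basis. h \<bullet> i * 0)) (at x)"
      by (simp add: has_derivative_const)
  qed (rule Suc.IH)
qed

lemma CK_linear:
  assumes L: "bounded_linear (L :: 'a::euclidean_space \<Rightarrow> real)" shows "CK k L"
proof (cases k)
  case 0 then show ?thesis
    using L by (simp add: linear_continuous_on)
next
  case (Suc m)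
  have "(L has_derivative (\<lambda>h. \<Sum>i\<in>Basis. (h \<bullet> i) * L i)) (at x)" for x
  proof -
    have "(\<lambda>h. \<Sum>i\<in>Basis. (h \<bullet> i) * L i) = L"
      by (rule ext) (rule linear_basis_expand[OF bounded_linear.linear[OF L], symmetric])
    then show ?thesis using bounded_linear_imp_has_derivative[OF L] by simp
  qed
  then show ?thesis unfolding Suc by (rule CK_SucI) (rule CK_const)
qed

lemma CK_add: "CK k f \<Longrightarrow> CK k g \<Longrightarrow> CK k (\<lambda>x. f x + g x)"
proof (induction k arbitrary: f g)
  case 0 then show ?case by (simp add: continuous_on_add)
next
  case (Suc k)
  show ?case
  proof (rule CK_SucI[where D="\<lambda>i x. pdir i f x + pdir i g x"])
    fix x show "((\<lambda>x. f x + g x) has_derivative (\<lambda>h. \<Sum>i\<in>Basis. h \<bullet> i * (pdir i f x + pdir i g x))) (at x)"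
      using has_derivative_add[OF CK_diff[OF Suc.prems(1)] CK_diff[OF Suc.prems(2)]]
      by (simp add: distrib_left sum.distrib)
  next
    fix i :: 'a assume i: "i \<in> Basis"
    show "CK k (\<lambda>x. pdir i f x + pdir i g x)"
      by (rule Suc.IH[OF CK_pdir[OF Suc.prems(1) i] CK_pdir[OF Suc.prems(2) i]])
  qed
qed

lemma CK_mult: "CK k f \<Longrightarrow> CK k g \<Longrightarrow> CK k (\<lambda>x. f x * g x)"
proof (induction k arbitrary: f g)
  case 0 then show ?case by (simp add: continuous_on_mult)
next
  case (Suc k)
  show ?case
  proof (rule CK_SucI[where D="\<lambda>i x. f x * pdir i g x + pdir i f x * g x"])
    fix x show "((\<lambda>x. f x * g x) has_derivative (\<lambda>h. \<Sum>i\<in>Basis. h \<bullet> i * (f x * pdir i g x + pdir i f x * g x))) (at x)"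
      using has_derivative_mult[OF CK_diff[OF Suc.prems(1)] CK_diff[OF Suc.prems(2)]]
      by (simp add: sum_distrib_left algebra_simps sum.distrib)
  next
    fix i :: 'a assume i: "i \<in> Basis"
    have f: "CK k f" and g: "CK k g" using Suc.prems CK_mono by blast+
    show "CK k (\<lambda>x. f x * pdir i g x + pdir i f x * g x)"
      by (rule CK_add[OF Suc.IH[OF f CK_pdir[OF Suc.prems(2) i]] Suc.IH[OF CK_pdir[OF Suc.prems(1) i] g]])
  qed
qed

lemma CK_scale: "CK k f \<Longrightarrow> CK k (\<lambda>x. c * f x)"
  using CK_mult[OF CK_const] by blast

lemma CK_minus: "CK k f \<Longrightarrow> CK k (\<lambda>x. - f x)"
  using CK_scale[of k f "-1"] by simp

lemma CK_diffop: "CK k f \<Longrightarrow> CK k g \<Longrightarrow> CK k (\<lambda>x. f x - g x)"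
  using CK_add[OF _ CK_minus, of k f g] by simp

lemma CK_sum: "finite S \<Longrightarrow> (\<And>s. s \<in> S \<Longrightarrow> CK k (f s)) \<Longrightarrow> CK k (\<lambda>x. \<Sum>s\<in>S. f s x)"
proof (induction S rule: finite_induct)
  case empty then show ?case by (simp add: CK_const)
next
  case (insert a S) then show ?case using CK_add[of k "f a" "\<lambda>x. \<Sum>s\<in>S. f s x"] by simp
qed

lemma CK_prod: "finite S \<Longrightarrow> (\<And>s. s \<in> S \<Longrightarrow> CK k (f s)) \<Longrightarrow> CK k (\<lambda>x. \<Prod>s\<in>S. f s x)"
proof (induction S rule: finite_induct)
  case empty then show ?case by (simp add: CK_const)
next
  case (insert a S) then show ?case using CK_mult[of k "f a" "\<lambda>x. \<Prod>s\<in>S. f s x"] by simp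
qed

lemma line_deriv:
  assumes "f differentiable (at (p + t0 *\<^sub>R v))"
  shows "((\<lambda>s. f (p + s *\<^sub>R v)) has_field_derivative pdir v f (p + t0 *\<^sub>R v)) (at t0)"
proof -
  have "((\<lambda>s. f ((p + t0 *\<^sub>R v) + s *\<^sub>R v)) has_field_derivative pdir v f (p + t0 *\<^sub>R v)) (at 0)"
    by (rule differentiable_pdir_field[OF assms])
  moreover have "(\<lambda>s. f ((p + t0 *\<^sub>R v) + s *\<^sub>R v)) = (\<lambda>s. f (p + (s + t0) *\<^sub>R v))"
    by (rule ext) (simp add: scaleR_add_left add_ac)
  ultimately have "((\<lambda>s. f (p + (s + t0) *\<^sub>R v)) has_field_derivative pdir v f (p + t0 *\<^sub>R v)) (at 0)"
    by simp
  then show ?thesis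
    using DERIV_shift[of "\<lambda>s. f (p + s *\<^sub>R v)" "pdir v f (p + t0 *\<^sub>R v)" 0 t0] by simp
qed

lemma line_deriv':
  fixes f :: "'a::real_normed_vector \<Rightarrow> real"
  assumes "\<And>x. ((\<lambda>t. f (x + t *\<^sub>R i)) has_field_derivative D x) (at 0)"
  shows "((\<lambda>t. f (w + t *\<^sub>R i)) has_field_derivative D (w + t0 *\<^sub>R i)) (at t0)"
proof -
  have "((\<lambda>s. f ((w + t0 *\<^sub>R i) + s *\<^sub>R i)) has_field_derivative D (w + t0 *\<^sub>R i)) (at 0)"
    by (rule assms)
  moreover have "(\<lambda>s. f ((w + t0 *\<^sub>R i) + s *\<^sub>R i)) = (\<lambda>s. f (w + (s + t0) *\<^sub>R i))"
    by (rule ext) (simp add: scaleR_add_left add_ac)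
  ultimately have "((\<lambda>s. f (w + (s + t0) *\<^sub>R i)) has_field_derivative D (w + t0 *\<^sub>R i)) (at 0)"
    by simp
  then show ?thesis
    using DERIV_shift[of "\<lambda>s. f (w + s *\<^sub>R i)" "D (w + t0 *\<^sub>R i)" 0 t0] by simp
qed

lemma partials_diff:
  fixes f :: "'a::euclidean_space \<Rightarrow> real"
  assumes pd: "\<And>x i. i \<in> Basis \<Longrightarrow> ((\<lambda>t. f (x + t *\<^sub>R i)) has_field_derivative D i x) (at 0)"
    and cont: "\<And>i. i \<in> Basis \<Longrightarrow> continuous_on UNIV (D i)"
  shows "(f has_derivative (\<lambda>h. \<Sum>i\<in>Basis. (h \<bullet> i) * D i x)) (at x)"
proof -
  have main: "\<forall>x y. ((\<lambda>h. f (x + (\<Sum>i\<in>S. (h \<bullet> i) *\<^sub>R i))) has_derivative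
      (\<lambda>k. \<Sum>i\<in>S. (k \<bullet> i) * D i (x + (\<Sum>i\<in>S. (y \<bullet> i) *\<^sub>R i)))) (at y)"
    if "finite S" "S \<subseteq> Basis" for S
    using that
  proof (induction S rule: finite_induct)
    case empty
    show ?case by (simp add: has_derivative_const)
  next
    case (insert j S)
    have j: "j \<in> Basis" and SB: "S \<subseteq> Basis" using insert.prems by auto
    note IH = insert.IH[OF SB]
    show ?case
    proof (intro allI)
      fix x y :: 'a
      define F where "F t h = f (x + t *\<^sub>R j + (\<Sum>i\<in>S. (h \<bullet> i) *\<^sub>R i))" for t h
      define fy where "fy t h = (\<Sum>i\<in>S. D i (x + t *\<^sub>R j + (\<Sum>i\<in>S. (h \<bullet> i) *\<^sub>R i)) *\<^sub>R blinfun_inner_left i)" for t h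
      define w where "w = x + (\<Sum>i\<in>S. (y \<bullet> i) *\<^sub>R i)"
      have fx: "((\<lambda>t. F t y) has_derivative (\<lambda>s. D j (w + (y \<bullet> j) *\<^sub>R j) * s)) (at (y \<bullet> j) within UNIV)"
      proof -
        have "((\<lambda>t. f (w + t *\<^sub>R j)) has_field_derivative D j (w + (y \<bullet> j) *\<^sub>R j)) (at (y \<bullet> j))"
          by (rule line_deriv'[of f j "D j"]) (rule pd[OF j])
        moreover have "(\<lambda>t. F t y) = (\<lambda>t. f (w + t *\<^sub>R j))"
          by (rule ext) (simp add: F_def w_def algebra_simps)
        ultimately show ?thesis by (simp add: has_field_derivative_def)
      qed
      have fy: "((\<lambda>h. F t h) has_derivative blinfun_apply (fy t h)) (at h within UNIV)" for t h
      proof -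
        have "((\<lambda>h. f ((x + t *\<^sub>R j) + (\<Sum>i\<in>S. (h \<bullet> i) *\<^sub>R i))) has_derivative
          (\<lambda>k. \<Sum>i\<in>S. (k \<bullet> i) * D i ((x + t *\<^sub>R j) + (\<Sum>i\<in>S. (h \<bullet> i) *\<^sub>R i)))) (at h)"
          using IH by blast
        moreover have "blinfun_apply (fy t h) = (\<lambda>k. \<Sum>i\<in>S. (k \<bullet> i) * D i ((x + t *\<^sub>R j) + (\<Sum>i\<in>S. (h \<bullet> i) *\<^sub>R i)))"
          by (rule ext) (simp add: fy_def blinfun.sum_left blinfun.scaleR_left mult.commute)
        ultimately show ?thesis by (simp add: F_def)
      qed
      have contfy: "continuous_on UNIV (\<lambda>p. fy (fst p) (snd p))"
        unfolding fy_def
      proof (intro continuous_on_sum continuous_on_scaleR continuous_on_const)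
        fix i assume "i \<in> S"
        then have iB: "i \<in> Basis" using SB by auto
        show "continuous_on UNIV (\<lambda>p. D i (x + fst p *\<^sub>R j + (\<Sum>i\<in>S. (snd p \<bullet> i) *\<^sub>R i)))"
          by (rule continuous_on_compose2[OF cont[OF iB]]) (auto intro!: continuous_intros)
      qed
      have fy_cont: "continuous (at (y \<bullet> j, y) within UNIV \<times> UNIV) (\<lambda>(t, h). fy t h)"
        using contfy unfolding case_prod_unfold continuous_on_eq_continuous_at[OF open_UNIV] by simp
      have P: "((\<lambda>(t, h). F t h) has_derivative (\<lambda>(tx, ty). D j (w + (y \<bullet> j) *\<^sub>R j) * tx + blinfun_apply (fy (y \<bullet> j) y) ty))
          (at (y \<bullet> j, y) within UNIV \<times> UNIV)"
        by (rule has_derivative_partialsI[OF fx fy fy_cont]) auto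
      have phi: "((\<lambda>h. (h \<bullet> j, h)) has_derivative (\<lambda>k. (k \<bullet> j, k))) (at y)"
        by (intro has_derivative_Pair bounded_linear_imp_has_derivative bounded_linear_inner_left has_derivative_ident)
      have C: "((\<lambda>h. (\<lambda>(t, h). F t h) (h \<bullet> j, h)) has_derivative
          (\<lambda>k. (\<lambda>(tx, ty). D j (w + (y \<bullet> j) *\<^sub>R j) * tx + blinfun_apply (fy (y \<bullet> j) y) ty) (k \<bullet> j, k))) (at y)"
        using has_derivative_compose[OF phi, of "\<lambda>(t, h). F t h"] P by (simp only: UNIV_Times_UNIV)
      have sumins: "(\<Sum>i\<in>insert j S. (h \<bullet> i) *\<^sub>R i) = (h \<bullet> j) *\<^sub>R j + (\<Sum>i\<in>S. (h \<bullet> i) *\<^sub>R i)" for h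
        using insert.hyps by simp
      have E1: "(\<lambda>h. (\<lambda>(t, h). F t h) (h \<bullet> j, h)) = (\<lambda>h. f (x + (\<Sum>i\<in>insert j S. (h \<bullet> i) *\<^sub>R i)))"
        by (rule ext) (simp add: F_def sumins add.assoc)
      have wz: "w + (y \<bullet> j) *\<^sub>R j = x + (\<Sum>i\<in>insert j S. (y \<bullet> i) *\<^sub>R i)"
        by (simp add: w_def sumins algebra_simps)
      have E2: "(\<lambda>k. (\<lambda>(tx, ty). D j (w + (y \<bullet> j) *\<^sub>R j) * tx + blinfun_apply (fy (y \<bullet> j) y) ty) (k \<bullet> j, k))
          = (\<lambda>k. \<Sum>i\<in>insert j S. (k \<bullet> i) * D i (x + (\<Sum>i\<in>insert j S. (y \<bullet> i) *\<^sub>R i)))"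
      proof (rule ext)
        fix k
        have "blinfun_apply (fy (y \<bullet> j) y) k = (\<Sum>i\<in>S. (k \<bullet> i) * D i (w + (y \<bullet> j) *\<^sub>R j))"
          by (simp add: fy_def blinfun.sum_left blinfun.scaleR_left w_def algebra_simps)
        then show "(\<lambda>(tx, ty). D j (w + (y \<bullet> j) *\<^sub>R j) * tx + blinfun_apply (fy (y \<bullet> j) y) ty) (k \<bullet> j, k)
          = (\<Sum>i\<in>insert j S. (k \<bullet> i) * D i (x + (\<Sum>i\<in>insert j S. (y \<bullet> i) *\<^sub>R i)))"
          using insert.hyps by (simp add: wz mult.commute)
      qed
      show "((\<lambda>h. f (x + (\<Sum>i\<in>insert j S. (h \<bullet> i) *\<^sub>R i))) has_derivative
          (\<lambda>k. \<Sum>i\<in>insert j S. (k \<bullet> i) * D i (x + (\<Sum>i\<in>insert j S. (y \<bullet> i) *\<^sub>R i)))) (at y)"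
        using C unfolding E1 E2 .
    qed
  qed
  have "((\<lambda>h. f (0 + (\<Sum>i\<in>Basis. (h \<bullet> i) *\<^sub>R i))) has_derivative
      (\<lambda>k. \<Sum>i\<in>Basis. (k \<bullet> i) * D i (0 + (\<Sum>i\<in>Basis. (x \<bullet> i) *\<^sub>R i)))) (at x)"
    using main[OF finite_Basis order_refl] by blast
  then show ?thesis by (simp add: euclidean_representation)
qed

lemma CK_inverse: "CK k f \<Longrightarrow> (\<And>x. f x \<noteq> 0) \<Longrightarrow> CK k (\<lambda>x. inverse (f x))"
proof (induction k arbitrary: f)
  case 0 then show ?case by (simp add: continuous_on_inverse)
next
  case (Suc k)
  show ?case
  proof (rule CK_SucI[where D="\<lambda>i x. - (inverse (f x) * pdir i f x * inverse (f x))"])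
    fix x
    have "((\<lambda>x. inverse (f x)) has_derivative
       (\<lambda>h. - (inverse (f x) * (\<Sum>i\<in>Basis. h \<bullet> i * pdir i f x) * inverse (f x)))) (at x)"
      by (rule Deriv.has_derivative_inverse[OF Suc.prems(2) CK_diff[OF Suc.prems(1)]])
    moreover have "(\<lambda>h. - (inverse (f x) * (\<Sum>i\<in>Basis. h \<bullet> i * pdir i f x) * inverse (f x)))
       = (\<lambda>h. \<Sum>i\<in>Basis. h \<bullet> i * - (inverse (f x) * pdir i f x * inverse (f x)))"
      by (rule ext) (simp add: sum_distrib_left sum_distrib_right sum_negf[symmetric] mult.assoc mult.left_commute)
    ultimately show "((\<lambda>x. inverse (f x)) has_derivative
       (\<lambda>h. \<Sum>i\<in>Basis. h \<bullet> i * - (inverse (f x) * pdir i f x * inverse (f x)))) (at x)"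
      by simp
  next
    fix i :: 'a assume i: "i \<in> Basis"
    have inv: "CK k (\<lambda>x. inverse (f x))" using Suc.IH[OF CK_mono[OF Suc.prems(1)] Suc.prems(2)] .
    show "CK k (\<lambda>x. - (inverse (f x) * pdir i f x * inverse (f x)))"
      by (rule CK_minus[OF CK_mult[OF CK_mult[OF inv CK_pdir[OF Suc.prems(1) i]] inv]])
  qed
qed

lemma CK_divide: "CK k f \<Longrightarrow> CK k g \<Longrightarrow> (\<And>x. g x \<noteq> 0) \<Longrightarrow> CK k (\<lambda>x. f x / g x)"
  using CK_mult[OF _ CK_inverse, of k f g] by (simp add: divide_inverse)

lemma CK_comp:
  fixes f :: "'b::euclidean_space \<Rightarrow> real" and G :: "'a::euclidean_space \<Rightarrow> 'b"
  assumes "CK k f" and "\<And>j. j \<in> Basis \<Longrightarrow> CK k (\<lambda>x. G x \<bullet> j)"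
  shows "CK k (\<lambda>x. f (G x))"
  using assms
proof (induction k arbitrary: f)
  case 0
  have "continuous_on UNIV G"
    using 0 by (simp add: continuous_on_componentwise[where f=G])
  then show ?case using continuous_on_compose2[OF CK_cont[OF 0(1)], of UNIV G] by simp
next
  case (Suc k)
  define DG where "DG x h = (\<Sum>j\<in>Basis. (\<Sum>i\<in>Basis. h \<bullet> i * pdir i (\<lambda>x. G x \<bullet> j) x) *\<^sub>R j)" for x h
  show ?case
  proof (rule CK_SucI[where D="\<lambda>i x. \<Sum>j\<in>Basis. pdir i (\<lambda>x. G x \<bullet> j) x * pdir j f (G x)"])
    fix x
    have DGj: "DG x h \<bullet> j = (\<Sum>i\<in>Basis. h \<bullet> i * pdir i (\<lambda>x. G x \<bullet> j) x)" if "j \<in> Basis" for h j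
    proof -
      have "DG x h \<bullet> j = (\<Sum>j'\<in>Basis. (if j' = j then (\<Sum>i\<in>Basis. h \<bullet> i * pdir i (\<lambda>x. G x \<bullet> j) x) else 0))"
        unfolding DG_def inner_sum_left using that
        by (intro sum.cong refl) (simp add: inner_Basis)
      also have "\<dots> = (\<Sum>i\<in>Basis. h \<bullet> i * pdir i (\<lambda>x. G x \<bullet> j) x)" using that by simp
      finally show ?thesis .
    qed
    have G: "(G has_derivative DG x) (at x)"
    proof (subst has_derivative_componentwise_within, intro ballI)
      fix j :: 'b assume j: "j \<in> Basis"
      have "((\<lambda>x. G x \<bullet> j) has_derivative (\<lambda>h. \<Sum>i\<in>Basis. h \<bullet> i * pdir i (\<lambda>x. G x \<bullet> j) x)) (at x)"
        by (rule CK_diff[OF Suc.prems(2)[OF j]])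
      moreover have "(\<lambda>h. DG x h \<bullet> j) = (\<lambda>h. \<Sum>i\<in>Basis. h \<bullet> i * pdir i (\<lambda>x. G x \<bullet> j) x)"
        by (rule ext) (rule DGj[OF j])
      ultimately show "((\<lambda>x. G x \<bullet> j) has_derivative (\<lambda>h. DG x h \<bullet> j)) (at x)" by simp
    qed
    have C: "((\<lambda>x. f (G x)) has_derivative (\<lambda>h. \<Sum>j\<in>Basis. DG x h \<bullet> j * pdir j f (G x))) (at x)"
      using has_derivative_compose[OF G CK_diff[OF Suc.prems(1)]] .
    have "(\<lambda>h. \<Sum>j\<in>Basis. DG x h \<bullet> j * pdir j f (G x)) =
       (\<lambda>h. \<Sum>i\<in>Basis. h \<bullet> i * (\<Sum>j\<in>Basis. pdir i (\<lambda>x. G x \<bullet> j) x * pdir j f (G x)))"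
    proof (rule ext)
      fix h
      have "(\<Sum>j\<in>Basis. DG x h \<bullet> j * pdir j f (G x)) =
          (\<Sum>j\<in>Basis. (\<Sum>i\<in>Basis. h \<bullet> i * pdir i (\<lambda>x. G x \<bullet> j) x) * pdir j f (G x))"
        by (intro sum.cong refl) (simp add: DGj)
      also have "\<dots> = (\<Sum>j\<in>Basis. \<Sum>i\<in>Basis. h \<bullet> i * (pdir i (\<lambda>x. G x \<bullet> j) x * pdir j f (G x)))"
        by (simp add: sum_distrib_right mult.assoc)
      also have "\<dots> = (\<Sum>i\<in>Basis. \<Sum>j\<in>Basis. h \<bullet> i * (pdir i (\<lambda>x. G x \<bullet> j) x * pdir j f (G x)))"
        by (rule sum.swap)
      also have "\<dots> = (\<Sum>i\<in>Basis. h \<bullet> i * (\<Sum>j\<in>Basis. pdir i (\<lambda>x. G x \<bullet> j) x * pdir j f (G x)))"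
        by (simp add: sum_distrib_left)
      finally show "(\<Sum>j\<in>Basis. DG x h \<bullet> j * pdir j f (G x)) =
          (\<Sum>i\<in>Basis. h \<bullet> i * (\<Sum>j\<in>Basis. pdir i (\<lambda>x. G x \<bullet> j) x * pdir j f (G x)))" .
    qed
    with C show "((\<lambda>x. f (G x)) has_derivative
       (\<lambda>h. \<Sum>i\<in>Basis. h \<bullet> i * (\<Sum>j\<in>Basis. pdir i (\<lambda>x. G x \<bullet> j) x * pdir j f (G x)))) (at x)"
      by simp
  next
    fix i :: 'a assume i: "i \<in> Basis"
    have Gk: "CK k (\<lambda>x. G x \<bullet> j)" if "j \<in> Basis" for j
      using CK_mono[OF Suc.prems(2)[OF that]] .
    show "CK k (\<lambda>x. \<Sum>j\<in>Basis. pdir i (\<lambda>x. G x \<bullet> j) x * pdir j f (G x))"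
    proof (rule CK_sum[OF finite_Basis])
      fix j :: 'b assume j: "j \<in> Basis"
      show "CK k (\<lambda>x. pdir i (\<lambda>x. G x \<bullet> j) x * pdir j f (G x))"
        by (rule CK_mult[OF CK_pdir[OF Suc.prems(2)[OF j] i] Suc.IH[OF CK_pdir[OF Suc.prems(1) j] Gk]])
    qed
  qed
qed

lemma Basis_prod_left: "i \<in> Basis \<Longrightarrow> ((i, 0) :: 'a::euclidean_space \<times> 'b::euclidean_space) \<in> Basis"
  by (simp add: Basis_prod_def)

lemma Basis_prod_right: "i \<in> Basis \<Longrightarrow> ((0, i) :: 'a::euclidean_space \<times> 'b::euclidean_space) \<in> Basis"
  by (simp add: Basis_prod_def)

lemma Basis_prod_cases:
  assumes "(j :: 'a::euclidean_space \<times> 'b::euclidean_space) \<in> Basis"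
  obtains i where "i \<in> Basis" "j = (i, 0)" | i where "i \<in> Basis" "j = (0, i)"
  using assms by (auto simp: Basis_prod_def)

lemma CK_integral01:
  fixes h :: "'a::euclidean_space \<times> real \<Rightarrow> real"
  assumes "CK k h"
  shows "CK k (\<lambda>w. integral {0..1} (\<lambda>u. h (w, u)))"
  using assms
proof (induction k arbitrary: h)
  case 0
  have "continuous_on (UNIV \<times> cbox 0 1) (\<lambda>(x, t). h (x, t))"
    using continuous_on_subset[OF CK_cont[OF 0] subset_UNIV] by simp
  from integral_continuous_on_param[OF this] show ?case by simp
next
  case (Suc k)
  define D where "D i w = integral {0..1} (\<lambda>u. pdir (i, 0) h (w, u))" for i w
  have hdiff: "h differentiable (at p)" for p using Suc.prems unfolding CK.simps by blast
  have hcont: "continuous_on UNIV h" using CK_cont[OF Suc.prems] .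
  have pd: "((\<lambda>t. integral {0..1} (\<lambda>u. h (w + t *\<^sub>R i, u))) has_field_derivative D i w) (at 0)"
    if i: "i \<in> Basis" for w i
  proof -
    have pc: "continuous_on UNIV (pdir (i, 0) h)"
      using CK_cont[OF CK_pdir[OF Suc.prems Basis_prod_left[OF i]]] .
    have eq: "(w + t *\<^sub>R i, u) = (w, u) + t *\<^sub>R (i, 0)" for t u by simp
    have L: "((\<lambda>ux. integral (cbox 0 1) (\<lambda>u. h (w + ux *\<^sub>R i, u))) has_field_derivative
        integral (cbox 0 1) (\<lambda>u. pdir (i, 0) h (w + 0 *\<^sub>R i, u))) (at 0 within UNIV)"
    proof (rule leibniz_rule_field_derivative[where fx="\<lambda>s u. pdir (i, 0) h (w + s *\<^sub>R i, u)"])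
      fix s u :: real
      show "((\<lambda>s. h (w + s *\<^sub>R i, u)) has_field_derivative pdir (i, 0) h (w + s *\<^sub>R i, u)) (at s within UNIV)"
        using line_deriv[OF hdiff[of "(w, u) + s *\<^sub>R (i, 0)"]] by (simp only: eq[symmetric])
    next
      fix s :: real
      show "(\<lambda>u. h (w + s *\<^sub>R i, u)) integrable_on cbox 0 1"
        by (rule integrable_continuous, rule continuous_on_compose2[OF hcont]) (intro continuous_intros, simp)
    next
      show "continuous_on (UNIV \<times> cbox 0 1) (\<lambda>(s, u). pdir (i, 0) h (w + s *\<^sub>R i, u))"
        unfolding case_prod_unfold
        by (rule continuous_on_compose2[OF pc]) (intro continuous_intros, simp)
    qed (simp_all add: convex_UNIV)
    then show ?thesis by (simp add: D_def)
  qed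
  have Dk: "CK k (D i)" if "i \<in> Basis" for i
    unfolding D_def by (rule Suc.IH[OF CK_pdir[OF Suc.prems Basis_prod_left[OF that]]])
  show ?case
  proof (rule CK_SucI[where D=D])
    fix x
    show "((\<lambda>w. integral {0..1} (\<lambda>u. h (w, u))) has_derivative (\<lambda>v. \<Sum>i\<in>Basis. v \<bullet> i * D i x)) (at x)"
      by (rule partials_diff[OF pd CK_cont[OF Dk]])
  qed (rule Dk)
qed

lemma Basis_vec_axis: "(b :: real^'n) \<in> Basis \<Longrightarrow> \<exists>j. b = axis j 1"
  by (auto simp: Basis_vec_def)

lemma partial_deriv_pdir: "partial_deriv i f = pdir (axis i 1) f"
  by (rule ext) (simp add: partial_deriv_def pdir_def)

lemma Ck_cont: "Ck k f \<Longrightarrow> continuous_on UNIV f"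
  by (cases k) simp_all

lemma Ck_CK: "Ck k f = CK k (f :: real^'n \<Rightarrow> real)"
proof (induction k arbitrary: f)
  case 0 then show ?case by simp
next
  case (Suc k)
  show ?case
  proof
    assume A: "Ck (Suc k) f"
    have pdk: "CK k (pdir b f)" if bB: "b \<in> Basis" for b
    proof -
      obtain j where j: "b = axis j 1" using Basis_vec_axis[OF bB] by blast
      have "Ck k (partial_deriv j f)" using A by simp
      then show ?thesis using Suc.IH j partial_deriv_pdir by metis
    qed
    have "f differentiable (at x)" for x
    proof -
      have "(f has_derivative (\<lambda>h. \<Sum>i\<in>Basis. (h \<bullet> i) * pdir i f x)) (at x)"
      proof (rule partials_diff)
        fix x :: "real^'n" and b :: "real^'n" assume b: "b \<in> Basis"
        obtain j where j: "b = axis j 1" using Basis_vec_axis[OF b] by blast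
        have "(\<lambda>t. f (x + t *\<^sub>R axis j 1)) differentiable (at 0)" using A by simp
        then show "((\<lambda>t. f (x + t *\<^sub>R b)) has_field_derivative pdir b f x) (at 0)"
          unfolding j pdir_def by (simp add: DERIV_deriv_iff_real_differentiable)
      next
        fix b :: "real^'n" assume "b \<in> Basis"
        show "continuous_on UNIV (pdir b f)" using CK_cont[OF pdk[OF \<open>b \<in> Basis\<close>]] .
      qed
      then show ?thesis by (rule differentiableI)
    qed
    with pdk show "CK (Suc k) f" by simp
  next
    assume A: "CK (Suc k) f"
    have "continuous_on UNIV f" using CK_cont[OF A] .
    moreover have "(\<lambda>t. f (x + t *\<^sub>R axis i 1)) differentiable (at 0)" for x i
    proof -
      have "f differentiable (at x)" using A by simp
      from differentiable_pdir_field[OF this, of "axis i 1"]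
      show ?thesis unfolding has_field_derivative_def by (rule differentiableI)
    qed
    moreover have "Ck k (partial_deriv i f)" for i
      using A Suc.IH by (simp add: partial_deriv_pdir)
    ultimately show "Ck (Suc k) f" by simp
  qed
qed

lemma smooth_fun_CK: "smooth_fun f \<longleftrightarrow> (\<forall>k. CK k f)"
  by (simp add: smooth_fun_def Ck_CK)

lemma smooth_fun_partial: "smooth_fun f \<Longrightarrow> smooth_fun (partial_deriv i f)"
  unfolding smooth_fun_def
proof
  fix k assume "\<forall>k. Ck k f"
  then have "Ck (Suc k) f" by blast
  then show "Ck k (partial_deriv i f)" by simp
qed

lemma CK_inner: "CK k (\<lambda>x. x \<bullet> c)"
  by (rule CK_linear) (rule bounded_linear_inner_left)

lemma CK_det:
  fixes M :: "'a::euclidean_space \<Rightarrow> real^'n^'n"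
  assumes "\<And>i j. CK k (\<lambda>z. M z $ i $ j)"
  shows "CK k (\<lambda>z. det (M z))"
  unfolding det_def
proof (rule CK_sum)
  show "finite {p. p permutes (UNIV :: 'n set)}" by (simp add: finite_permutations)
next
  fix p assume "p \<in> {p. p permutes (UNIV :: 'n set)}"
  show "CK k (\<lambda>z. of_int (sign p) * (\<Prod>i\<in>UNIV. M z $ i $ p i))"
    by (rule CK_mult[OF CK_const CK_prod]) (simp_all add: assms)
qed

lemma matrix_inv_entry:
  fixes A :: "real^'n^'n"
  assumes "invertible A"
  shows "matrix_inv A $ c $ d = det (\<chi> i j. if j = c then axis d 1 $ i else A $ i $ j) / det A"
proof -
  have d0: "det A \<noteq> 0" using assms by (simp add: invertible_det_nz)
  have AB: "A ** matrix_inv A = mat 1"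
    using assms unfolding invertible_def matrix_inv_def by (rule someI_ex[THEN conjunct1])
  define x where "x = matrix_inv A *v axis d 1"
  have "A *v x = axis d 1"
    by (simp add: x_def matrix_vector_mul_assoc AB)
  then have "x = (\<chi> k. det (\<chi> i j. if j = k then axis d 1 $ i else A $ i $ j) / det A)"
    using cramer[OF d0] by blast
  then have "x $ c = det (\<chi> i j. if j = c then axis d 1 $ i else A $ i $ j) / det A" by simp
  moreover have "x $ c = matrix_inv A $ c $ d"
    by (simp add: x_def matrix_vector_mult_basis column_def)
  ultimately show ?thesis by simp
qed

lemma CK_christoffel:
  assumes g: "pseudo_riemannian_metric g"
  shows "CK k (christoffel g c a b)"
proof -
  have gs: "smooth_fun (\<lambda>z. g z $ i $ j)" for i j using g by (simp add: pseudo_riemannian_metric_def)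
  have gk: "CK k (\<lambda>z. g z $ i $ j)" for i j using gs[of i j] by (simp add: smooth_fun_CK)
  have pk: "CK k (partial_deriv e (\<lambda>z. g z $ i $ j))" for e i j
    using smooth_fun_partial[OF gs[of i j], of e] by (simp add: smooth_fun_CK)
  have inv: "invertible (g z)" for z using g by (simp add: pseudo_riemannian_metric_def)
  have dnz: "det (g z) \<noteq> 0" for z using inv[of z] by (simp add: invertible_det_nz)
  have detk: "CK k (\<lambda>z. det (g z))" by (rule CK_det[OF gk])
  have mk: "CK k (\<lambda>z. matrix_inv (g z) $ c' $ d)" for c' d
  proof -
    have "CK k (\<lambda>z. det (\<chi> i j. if j = c' then axis d 1 $ i else g z $ i $ j) / det (g z))"
    proof (rule CK_divide[OF CK_det detk dnz])
      fix i j
      show "CK k (\<lambda>z. (\<chi> i j. if j = c' then axis d 1 $ i else g z $ i $ j) $ i $ j)"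
        by (cases "j = c'") (simp_all add: CK_const gk)
    qed
    then show ?thesis by (simp add: matrix_inv_entry[OF inv])
  qed
  have eq: "christoffel g c a b = (\<lambda>z. (1/2) * (\<Sum>d\<in>UNIV. matrix_inv (g z) $ c $ d *
      (partial_deriv a (\<lambda>w. g w $ b $ d) z + partial_deriv b (\<lambda>w. g w $ a $ d) z
       - partial_deriv d (\<lambda>w. g w $ a $ b) z)))"
    by (rule ext) (simp add: christoffel_def)
  show ?thesis unfolding eq
    by (intro CK_mult[OF CK_const] CK_sum CK_mult[OF mk] CK_add CK_diffop pk finite)
qed

definition OI :: "(real \<Rightarrow> real) \<Rightarrow> real \<Rightarrow> real" where
  "OI h t = t * integral {0..1} (\<lambda>u. h (t * u))"

lemma OI_0 [simp]: "OI h 0 = 0"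
  by (simp add: OI_def)

lemma image_div_pos: "t > 0 \<Longrightarrow> (\<lambda>x. x / t) ` {0..t} = {0..1::real}"
proof (rule set_eqI, rule iffI)
  fix y assume t: "t > 0" and "y \<in> (\<lambda>x. x / t) ` {0..t}"
  then obtain x where "x \<in> {0..t}" "y = x / t" by blast
  then show "y \<in> {0..1}" using t by (simp add: divide_le_eq_1)
next
  fix y assume t: "t > 0" and y: "y \<in> {0..1::real}"
  have "t * y \<in> {0..t}" using t y by (simp add: mult_le_cancel_left1)
  moreover have "y = (t * y) / t" using t by simp
  ultimately show "y \<in> (\<lambda>x. x / t) ` {0..t}" by blast
qed

lemma image_div_neg: "t < 0 \<Longrightarrow> (\<lambda>x. x / t) ` {t..0} = {0..1::real}"
proof (rule set_eqI, rule iffI)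
  fix y assume t: "t < 0" and "y \<in> (\<lambda>x. x / t) ` {t..0}"
  then obtain x where "x \<in> {t..0}" "y = x / t" by blast
  then show "y \<in> {0..1}" using t by (simp add: divide_le_eq_1 divide_nonpos_neg)
next
  fix y assume t: "t < 0" and y: "y \<in> {0..1::real}"
  have "t * y \<in> {t..0}" using t y by (simp add: mult_le_cancel_left1 mult_nonpos_nonneg)
  moreover have "y = (t * y) / t" using t by simp
  ultimately show "y \<in> (\<lambda>x. x / t) ` {t..0}" by blast
qed

lemma OI_pos: "t \<ge> 0 \<Longrightarrow> OI h t = integral {0..t} h"
proof (cases "t = 0")
  case False
  assume "t \<ge> 0" then have t: "t > 0" using False by simp
  have "integral ((\<lambda>x. x / t) ` {0..t}) (\<lambda>x. h (t * x)) = (1 / \<bar>t\<bar>) *\<^sub>R integral {0..t} h"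
    by (rule integral_stretch_real) (use t in simp)
  then show ?thesis using t by (simp add: OI_def image_div_pos)
qed simp

lemma OI_neg: "t \<le> 0 \<Longrightarrow> OI h t = - integral {t..0} h"
proof (cases "t = 0")
  case False
  assume "t \<le> 0" then have t: "t < 0" using False by simp
  have "integral ((\<lambda>x. x / t) ` {t..0}) (\<lambda>x. h (t * x)) = (1 / \<bar>t\<bar>) *\<^sub>R integral {t..0} h"
    by (rule integral_stretch_real) (use t in simp)
  then show ?thesis using t by (simp add: OI_def image_div_neg)
qed simp

lemma OI_diff:
  assumes h: "continuous_on UNIV h" and as: "a \<le> s"
  shows "OI h s - OI h a = integral {a..s} h"
proof -
  have I: "h integrable_on {x..y}" for x y
    by (rule integrable_continuous_interval) (rule continuous_on_subset[OF h subset_UNIV])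
  consider "0 \<le> a" | "s \<le> 0" | "a \<le> 0" "0 \<le> s" using as by linarith
  then show ?thesis
  proof cases
    case 1
    have "integral {0..a} h + integral {a..s} h = integral {0..s} h"
      by (rule Henstock_Kurzweil_Integration.integral_combine[OF 1 as I])
    then show ?thesis using 1 as by (simp add: OI_pos)
  next
    case 2
    have "integral {a..s} h + integral {s..0} h = integral {a..0} h"
      by (rule Henstock_Kurzweil_Integration.integral_combine[OF as 2 I])
    then show ?thesis using 2 as by (simp add: OI_neg)
  next
    case 3
    have "integral {a..0} h + integral {0..s} h = integral {a..s} h"
      by (rule Henstock_Kurzweil_Integration.integral_combine[OF 3 I])
    then show ?thesis using 3 by (simp add: OI_pos OI_neg)
  qed
qed

lemma OI_deriv:
  assumes h: "continuous_on UNIV h"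
  shows "(OI h has_real_derivative h t) (at t)"
proof -
  define a where "a = t - 1"
  define b where "b = t + 1"
  have tab: "t \<in> {a..b}" by (simp add: a_def b_def)
  have tab': "t \<in> {a<..<b}" by (simp add: a_def b_def)
  have ch: "continuous_on {a..b} h" by (rule continuous_on_subset[OF h subset_UNIV])
  have "((\<lambda>x. integral {a..x} h) has_real_derivative h t) (at t within {a..b})"
    by (rule integral_has_real_derivative[OF ch tab])
  then have "((\<lambda>x. integral {a..x} h) has_real_derivative h t) (at t within {a<..<b})"
    by (rule has_field_derivative_subset) (rule greaterThanLessThan_subseteq_atLeastAtMost_iff[THEN iffD2], simp)
  then have I: "((\<lambda>x. integral {a..x} h) has_real_derivative h t) (at t)"
    by (simp only: at_within_open[OF tab' open_greaterThanLessThan])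
  then have D: "((\<lambda>x. OI h a + integral {a..x} h) has_real_derivative h t) (at t)"
    using DERIV_add[OF DERIV_const[of "OI h a"] I] by simp
  show ?thesis
  proof (rule has_field_derivative_transform_within_open[OF D open_greaterThanLessThan tab'])
    fix x assume "x \<in> {a<..<b}"
    then have "a \<le> x" by simp
    then show "OI h a + integral {a..x} h = OI h x"
      using OI_diff[OF h, of a x] by simp
  qed
qed

lemma OI_cont: "continuous_on UNIV h \<Longrightarrow> continuous_on UNIV (OI h)"
  using OI_deriv by (meson DERIV_isCont continuous_at_imp_continuous_on)

lemma CK_OI:
  fixes H :: "'a::euclidean_space \<times> real \<Rightarrow> real"
  assumes "CK k H"
  shows "CK k (\<lambda>p. OI (\<lambda>s. H (fst p, s)) (snd p))"
proof -
  define G where "G q = (fst (fst q), snd (fst q) * snd q)" for q :: "('a \<times> real) \<times> real"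
  have Gk: "CK k (\<lambda>q. G q \<bullet> j)" if j: "j \<in> Basis" for j
  proof -
    from j show ?thesis
    proof (cases rule: Basis_prod_cases)
      case (1 i)
      have "(\<lambda>q. G q \<bullet> j) = (\<lambda>q. q \<bullet> ((i, 0), 0))"
        by (rule ext) (simp add: G_def 1 inner_prod_def)
      then show ?thesis using CK_inner by metis
    next
      case (2 i)
      then have i1: "i = 1" by simp
      have "(\<lambda>q. G q \<bullet> j) = (\<lambda>q. (q \<bullet> ((0, 1), 0)) * (q \<bullet> (0, 1)))"
        by (rule ext) (simp add: G_def 2 i1 inner_prod_def)
      then show ?thesis using CK_mult[OF CK_inner CK_inner] by metis
    qed
  qed
  have K: "CK k (\<lambda>q. H (G q))" by (rule CK_comp[OF assms Gk])
  have Q: "CK k (\<lambda>p. integral {0..1} (\<lambda>u. H (G (p, u))))"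
    by (rule CK_integral01[OF K])
  have "CK k (\<lambda>p. (p \<bullet> (0, 1)) * integral {0..1} (\<lambda>u. H (G (p, u))))"
    by (rule CK_mult[OF CK_inner Q])
  moreover have "(\<lambda>p. (p \<bullet> (0, 1)) * integral {0..1} (\<lambda>u. H (G (p, u)))) = (\<lambda>p. OI (\<lambda>s. H (fst p, s)) (snd p))"
    by (rule ext) (simp add: OI_def G_def inner_prod_def)
  ultimately show ?thesis by simp
qed

definition rk :: "'n::{finite,linorder} \<Rightarrow> nat" where
  "rk c = card {j. j < c}"

lemma rk_less: "j < c \<Longrightarrow> rk j < rk (c::'n::{finite,linorder})"
  unfolding rk_def
proof (rule psubset_card_mono)
  assume "j < c"
  then show "{i. i < j} \<subset> {i. i < c}" by auto
qed simp

lemma rk_card: "rk (c::'n::{finite,linorder}) < CARD('n)"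
  unfolding rk_def by (rule psubset_card_mono) auto

lemma lin_induct:
  assumes step: "\<And>c. (\<And>j. j < c \<Longrightarrow> P j) \<Longrightarrow> P (c::'n::{finite,linorder})"
  shows "P c"
proof -
  have "\<forall>c. rk c = m \<longrightarrow> P c" for m
  proof (induction m rule: less_induct)
    case (less m)
    show ?case
    proof (intro allI impI)
      fix c :: 'n assume "rk c = m"
      then show "P c" using less rk_less step by blast
    qed
  qed
  then show ?thesis by blast
qed

lemma iter_stab:
  fixes T :: "('n::{finite,linorder} \<Rightarrow> 'x) \<Rightarrow> ('n \<Rightarrow> 'x)"
  assumes loc: "\<And>u u' c. (\<And>j. j < c \<Longrightarrow> u j = u' j) \<Longrightarrow> T u c = T u' c"
  shows "T ((T ^^ CARD('n)) u0) = (T ^^ CARD('n)) u0"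
proof -
  have claim: "\<forall>k. rk c < k \<longrightarrow> (T ^^ k) u0 c = (T ^^ Suc k) u0 c" for c
  proof (induction c rule: lin_induct)
    case (1 c)
    show ?case
    proof (intro allI impI)
      fix k assume k: "rk c < k"
      then obtain k' where k': "k = Suc k'" by (cases k) auto
      have "(T ^^ k') u0 j = (T ^^ Suc k') u0 j" if "j < c" for j
        using 1[OF that] rk_less[OF that] k k' by auto
      then have "T ((T ^^ k') u0) c = T ((T ^^ Suc k') u0) c" by (rule loc)
      then show "(T ^^ k) u0 c = (T ^^ Suc k) u0 c" using k' by simp
    qed
  qed
  show ?thesis
  proof
    fix c
    show "T ((T ^^ CARD('n)) u0) c = (T ^^ CARD('n)) u0 c"
      using claim[of c] rk_card[of c] by simp
  qed
qed

lemma iter_unique: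
  fixes T :: "('n::{finite,linorder} \<Rightarrow> 'x) \<Rightarrow> ('n \<Rightarrow> 'x)"
  assumes loc: "\<And>u u' c. (\<And>j. j < c \<Longrightarrow> u j = u' j) \<Longrightarrow> T u c = T u' c"
    and "T u = u" "T u' = u'"
  shows "u = u'"
proof
  fix c show "u c = u' c"
  proof (induction c rule: lin_induct)
    case (1 c)
    have "T u c = T u' c" by (rule loc) (rule 1)
    then show ?case using assms(2,3) by simp
  qed
qed

lemma vec_deriv:
  fixes F :: "'n::finite \<Rightarrow> real \<Rightarrow> real"
  assumes "\<And>c. ((\<lambda>t. F c t) has_real_derivative D c) (at t)"
  shows "((\<lambda>t. \<chi> c. F c t) has_vector_derivative (\<chi> c. D c)) (at t)"
  unfolding has_vector_derivative_def
proof (subst has_derivative_componentwise_within, intro ballI)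
  fix i :: "real^'n" assume "i \<in> Basis"
  then obtain j where j: "i = axis j 1" using Basis_vec_axis by blast
  have "(\<lambda>x. x * D j) = (*) (D j)" by (rule ext) (simp add: mult.commute)
  then have "((\<lambda>t. F j t) has_derivative (\<lambda>x. x * D j)) (at t)"
    using assms[of j] by (simp add: has_field_derivative_def)
  then show "((\<lambda>t. (\<chi> c. F c t) \<bullet> i) has_derivative (\<lambda>x. (x *\<^sub>R (\<chi> c. D c)) \<bullet> i)) (at t)"
    by (simp add: j inner_axis)
qed

lemma vec_deriv_comp:
  assumes "(\<gamma> has_vector_derivative D) (at t)"
  shows "((\<lambda>t. \<gamma> t $ c) has_real_derivative D $ c) (at t)"
proof -
  have "((\<lambda>t. \<gamma> t $ c) has_derivative (\<lambda>x. (x *\<^sub>R D) $ c)) (at t)"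
    using bounded_linear.has_derivative[OF bounded_linear_vec_nth assms[unfolded has_vector_derivative_def]] .
  moreover have "(\<lambda>x. (x *\<^sub>R D) $ c) = (*) (D $ c)" by (rule ext) (simp add: mult.commute)
  ultimately show ?thesis by (simp add: has_field_derivative_def)
qed

lemma OI_const_minus:
  assumes K: "continuous_on UNIV K"
  shows "OI (\<lambda>s. \<alpha> - K s) t = t * \<alpha> - OI K t"
proof -
  have "(\<lambda>u. K (t * u)) integrable_on {0..1}"
    by (rule integrable_continuous_interval, rule continuous_on_compose2[OF K]) (intro continuous_intros, simp)
  then have "integral {0..1} (\<lambda>u. \<alpha> - K (t * u)) = \<alpha> - integral {0..1} (\<lambda>u. K (t * u))"
    using Henstock_Kurzweil_Integration.integral_diff[of "\<lambda>u. \<alpha>" "cbox 0 (1::real)" "\<lambda>u. K (t * u)"]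
      integrable_const[of \<alpha> 0 "1::real"] by simp
  then show ?thesis unfolding OI_def by (simp add: right_diff_distrib)
qed

locale tri =
  fixes g :: "real^('n::{finite,linorder}) \<Rightarrow> real^('n::{finite,linorder})^('n::{finite,linorder})"
  assumes metric: "pseudo_riemannian_metric g"
    and triangular: "\<And>a b c z. christoffel g c a b z \<noteq> 0 \<Longrightarrow> a < c \<and> b < c"
    and dep: "\<And>a b c z w. (\<forall>j. j < c \<longrightarrow> z $ j = w $ j) \<Longrightarrow>
                christoffel g c a b z = christoffel g c a b w"
begin

definition Gs where
  "Gs c z y = (\<Sum>a\<in>UNIV. \<Sum>b\<in>UNIV. christoffel g c a b z * y $ a * y $ b)"

lemma Gs_loc:
  assumes "\<And>j. j < c \<Longrightarrow> z $ j = z' $ j \<and> y $ j = y' $ j"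
  shows "Gs c z y = Gs c z' y'"
  unfolding Gs_def
proof (intro sum.cong refl)
  fix a b
  show "christoffel g c a b z * y $ a * y $ b = christoffel g c a b z' * y' $ a * y' $ b"
  proof (cases "a < c \<and> b < c")
    case True
    have "christoffel g c a b z = christoffel g c a b z'"
      by (rule dep) (use assms in blast)
    then show ?thesis using True assms by simp
  next
    case False
    then have "christoffel g c a b z = 0" "christoffel g c a b z' = 0"
      using triangular by blast+
    then show ?thesis by simp
  qed
qed

lemma CK_Gs_comp:
  fixes Z Y :: "'a::euclidean_space \<Rightarrow> (real, 'n) vec"
  assumes "\<And>j. CK k (\<lambda>p. Z p $ j)" "\<And>j. CK k (\<lambda>p. Y p $ j)"
  shows "CK k (\<lambda>p. Gs c (Z p) (Y p))"
  unfolding Gs_def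
proof (intro CK_sum finite_UNIV CK_mult assms)
  fix a b
  show "CK k (\<lambda>p. christoffel g c a b (Z p))"
  proof (rule CK_comp[OF CK_christoffel[OF metric]])
    fix i :: "(real, 'n) vec" assume "i \<in> Basis"
    then obtain j where j: "i = axis j 1" using Basis_vec_axis by blast
    show "CK k (\<lambda>p. Z p \<bullet> i)" using assms(1)[of j] by (simp add: j inner_axis)
  qed
qed simp_all

definition GU where
  "GU (U :: 'n \<Rightarrow> (real \<Rightarrow> real) \<times> (real \<Rightarrow> real)) c s = Gs c (\<chi> j. fst (U j) s) (\<chi> j. snd (U j) s)"

definition TT where
  "TT P v U c = ((\<lambda>t. P $ c + OI (\<lambda>s. v $ c - OI (GU U c) s) t), (\<lambda>t. v $ c - OI (GU U c) t))"

lemma GU_loc: "(\<And>j. j < c \<Longrightarrow> U j = U' j) \<Longrightarrow> GU U c = GU U' c"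
  unfolding GU_def by (rule ext) (rule Gs_loc, simp)

lemma TT_loc: "(\<And>j. j < c \<Longrightarrow> U j = U' j) \<Longrightarrow> TT P v U c = TT P v U' c"
  unfolding TT_def using GU_loc by metis

definition U0 where
  "U0 c = ((\<lambda>t. 0), (\<lambda>t. 0))"

definition Sol where
  "Sol P v = (TT P v ^^ CARD('n)) U0"

lemma Sol_fix: "TT P v (Sol P v) = Sol P v"
  unfolding Sol_def by (rule iter_stab) (rule TT_loc)

lemma iter_CK:
  "\<forall>c. CK k (\<lambda>p. fst ((TT P (fst p) ^^ m) U0 c) (snd p)) \<and>
       CK k (\<lambda>p. snd ((TT P (fst p) ^^ m) U0 c) (snd p))"
proof (induction m)
  case 0 then show ?case by (simp add: U0_def CK_const)
next
  case (Suc m)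
  define U where "U p = (TT P p ^^ m) U0" for p
  have IH1: "CK k (\<lambda>p. fst (U (fst p) j) (snd p))" for j using Suc U_def by simp
  have IH2: "CK k (\<lambda>p. snd (U (fst p) j) (snd p))" for j using Suc U_def by simp
  show ?case
  proof
    fix c
    define H where "H p = GU (U (fst p)) c (snd p)" for p :: "(real, 'n) vec \<times> real"
    have Hk: "CK k H"
      unfolding H_def GU_def by (rule CK_Gs_comp) (simp_all add: IH1 IH2)
    define H2 where "H2 p = fst p $ c - OI (\<lambda>s. H (fst p, s)) (snd p)" for p :: "(real, 'n) vec \<times> real"
    have H2k: "CK k H2"
    proof -
      have "CK k (\<lambda>p::(real, 'n) vec \<times> real. p \<bullet> (axis c 1, 0))" by (rule CK_inner)
      moreover have "(\<lambda>p::(real, 'n) vec \<times> real. p \<bullet> (axis c 1, 0)) = (\<lambda>p. fst p $ c)"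
        by (rule ext) (simp add: inner_prod_def inner_axis)
      ultimately have "CK k (\<lambda>p::(real, 'n) vec \<times> real. fst p $ c)" by simp
      then show ?thesis unfolding H2_def by (rule CK_diffop[OF _ CK_OI[OF Hk]])
    qed
    have e2: "(\<lambda>p. snd ((TT P (fst p) ^^ Suc m) U0 c) (snd p)) = H2"
      by (rule ext) (simp add: TT_def U_def H_def H2_def)
    have e1: "(\<lambda>p. fst ((TT P (fst p) ^^ Suc m) U0 c) (snd p)) = (\<lambda>p. P $ c + OI (\<lambda>s. H2 (fst p, s)) (snd p))"
      by (rule ext) (simp add: TT_def U_def H_def H2_def)
    show "CK k (\<lambda>p. fst ((TT P (fst p) ^^ Suc m) U0 c) (snd p)) \<and>
       CK k (\<lambda>p. snd ((TT P (fst p) ^^ Suc m) U0 c) (snd p))"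
      unfolding e1 e2 using H2k CK_add[OF CK_const CK_OI[OF H2k]] by simp
  qed
qed

lemma Sol_CK1: "CK k (\<lambda>p. fst (Sol P (fst p) c) (snd p))"
  using iter_CK unfolding Sol_def by blast

lemma Sol_CK2: "CK k (\<lambda>p. snd (Sol P (fst p) c) (snd p))"
  using iter_CK unfolding Sol_def by blast

lemma CK_slice:
  fixes F :: "'a::euclidean_space \<times> real \<Rightarrow> real"
  assumes "CK 0 F" shows "continuous_on UNIV (\<lambda>t. F (v, t))"
  by (rule continuous_on_compose2[OF CK_cont[OF assms]]) (intro continuous_intros, simp)

lemma Sol_cont1: "continuous_on UNIV (fst (Sol P v c))"
  using CK_slice[OF Sol_CK1[of 0 P c], of v] by simp

lemma Sol_cont2: "continuous_on UNIV (snd (Sol P v c))"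
  using CK_slice[OF Sol_CK2[of 0 P c], of v] by simp

lemma GU_Sol_cont: "continuous_on UNIV (GU (Sol P v) c)"
proof -
  have "CK 0 (\<lambda>t::real. Gs c (\<chi> j. fst (Sol P v j) t) (\<chi> j. snd (Sol P v j) t))"
    by (rule CK_Gs_comp) (simp_all add: Sol_cont1 Sol_cont2)
  then show ?thesis unfolding GU_def by simp
qed

definition gam where
  "gam P v t = (\<chi> c. fst (Sol P v c) t)"
definition gam1 where
  "gam1 P v t = (\<chi> c. snd (Sol P v c) t)"
definition gam2 where
  "gam2 P v t = (\<chi> c. - GU (Sol P v) c t)"

lemma Sol_c: "Sol P v c = TT P v (Sol P v) c"
  using Sol_fix by simp

lemma gam_deriv: "(gam P v has_vector_derivative gam1 P v t) (at t)"
  unfolding gam_def gam1_def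
proof (rule vec_deriv)
  fix c
  have e: "fst (Sol P v c) = (\<lambda>t. P $ c + OI (snd (Sol P v c)) t)"
    by (subst (1 2) Sol_c) (simp add: TT_def)
  have "((\<lambda>t. P $ c + OI (snd (Sol P v c)) t) has_real_derivative 0 + snd (Sol P v c) t) (at t)"
    by (rule DERIV_add[OF DERIV_const OI_deriv[OF Sol_cont2]])
  then show "((\<lambda>t. fst (Sol P v c) t) has_real_derivative snd (Sol P v c) t) (at t)"
    by (simp add: e)
qed

lemma gam1_deriv: "(gam1 P v has_vector_derivative gam2 P v t) (at t)"
  unfolding gam1_def gam2_def
proof (rule vec_deriv)
  fix c
  have e: "snd (Sol P v c) = (\<lambda>t. v $ c - OI (GU (Sol P v) c) t)"
    by (subst Sol_c) (simp add: TT_def)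
  have "((\<lambda>t. v $ c - OI (GU (Sol P v) c) t) has_real_derivative 0 - GU (Sol P v) c t) (at t)"
    by (rule DERIV_diff[OF DERIV_const OI_deriv[OF GU_Sol_cont]])
  then show "((\<lambda>t. snd (Sol P v c) t) has_real_derivative - GU (Sol P v) c t) (at t)"
    by (simp add: e)
qed

lemma gam_eq: "gam2 P v t $ c + Gs c (gam P v t) (gam1 P v t) = 0"
  by (simp add: gam2_def GU_def gam_def gam1_def)

lemma gam_0: "gam P v 0 = P"
proof -
  have "fst (Sol P v c) 0 = P $ c" for c by (subst Sol_c) (simp add: TT_def)
  then show ?thesis by (simp add: gam_def vec_eq_iff)
qed

lemma gam1_0: "gam1 P v 0 = v"
proof -
  have "snd (Sol P v c) 0 = v $ c" for c by (subst Sol_c) (simp add: TT_def)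
  then show ?thesis by (simp add: gam1_def vec_eq_iff)
qed

lemma gam_geodesic: "is_geodesic g UNIV (gam P v)"
  unfolding is_geodesic_def
proof (intro conjI open_UNIV is_interval_univ exI ballI allI)
  fix t :: real and c
  show "(gam P v has_vector_derivative gam1 P v t) (at t)" by (rule gam_deriv)
  show "(gam1 P v has_vector_derivative gam2 P v t) (at t)" by (rule gam1_deriv)
  show "gam2 P v t $ c + (\<Sum>a\<in>UNIV. \<Sum>b\<in>UNIV. christoffel g c a b (gam P v t) * gam1 P v t $ a * gam1 P v t $ b) = 0"
    using gam_eq[of P v t c] by (simp add: Gs_def)
qed

end

lemma CK_nth: "CK k (\<lambda>w::real^'n. w $ c)"
proof -
  have "CK k (\<lambda>w::real^'n. w \<bullet> axis c 1)" by (rule CK_inner)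
  moreover have "(\<lambda>w::real^'n. w \<bullet> axis c 1) = (\<lambda>w. w $ c)" by (rule ext) (simp add: inner_axis)
  ultimately show ?thesis by simp
qed

lemma CK_comp_vec:
  fixes f :: "real^'n \<Rightarrow> real" and G :: "'a::euclidean_space \<Rightarrow> real^'n"
  assumes "CK k f" "\<And>j. CK k (\<lambda>x. G x $ j)"
  shows "CK k (\<lambda>x. f (G x))"
proof (rule CK_comp[OF assms(1)])
  fix i :: "real^'n" assume "i \<in> Basis"
  then obtain j where j: "i = axis j 1" using Basis_vec_axis by blast
  show "CK k (\<lambda>x. G x \<bullet> i)" using assms(2)[of j] by (simp add: j inner_axis)
qed

lemma tri_inverse:
  fixes F :: "(real, 'n::{finite,linorder}) vec \<Rightarrow> (real, 'n) vec" and f :: "'n \<Rightarrow> (real, 'n) vec \<Rightarrow> real"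
  assumes Fe: "\<And>v c. F v $ c = v $ c + f c v"
    and fdep: "\<And>c v v'. (\<forall>j. j < c \<longrightarrow> v $ j = v' $ j) \<Longrightarrow> f c v = f c v'"
    and fk: "\<And>c k. CK k (f c)"
  shows "bij F \<and> smooth_map (inv F)"
proof -
  define T where "T w u c = w $ c - f c (vec_lambda u)" for w :: "(real, 'n) vec" and u :: "'n \<Rightarrow> real" and c
  have loc: "T w u c = T w u' c" if "\<And>j. j < c \<Longrightarrow> u j = u' j" for w u u' c
    unfolding T_def using fdep[of c "vec_lambda u" "vec_lambda u'"] that by simp
  define H where "H w = vec_lambda ((T w ^^ CARD('n)) (\<lambda>c. 0))" for w
  have fixH: "T w (vec_nth (H w)) = vec_nth (H w)" for w
  proof -
    have vl: "vec_nth (vec_lambda u) = u" for u :: "'n \<Rightarrow> real" by (rule ext) simp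
    show ?thesis unfolding H_def vl using iter_stab[of "T w" "\<lambda>c. 0", OF loc] .
  qed
  have FH: "F (H w) = w" for w
  proof -
    have "F (H w) $ c = w $ c" for c
    proof -
      have "H w $ c = T w (vec_nth (H w)) c" using fixH[of w] by simp
      then show ?thesis by (simp add: Fe T_def)
    qed
    then show ?thesis by (simp add: vec_eq_iff)
  qed
  have fixv: "T (F v) (vec_nth v) = vec_nth v" for v
    by (rule ext) (simp add: T_def Fe)
  have inj: "inj F"
  proof (rule injI)
    fix v v' assume e: "F v = F v'"
    have "vec_nth v = vec_nth v'"
      using iter_unique[of "T (F v)", OF loc fixv fixv[of v', folded e]] .
    then show "v = v'" by (simp add: vec_eq_iff)
  qed
  have surj: "surj F" using FH by (metis surjI)
  have invF: "inv F = H"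
    by (rule ext) (rule inv_f_eq[OF inj FH])
  have iterk: "\<forall>c. CK k (\<lambda>w. (T w ^^ m) (\<lambda>c. 0) c)" for k m
  proof (induction m)
    case 0 then show ?case by (simp add: CK_const)
  next
    case (Suc m)
    show ?case
    proof
      fix c
      have "CK k (\<lambda>w. f c (\<chi> j. (T w ^^ m) (\<lambda>c. 0) j))"
        by (rule CK_comp_vec[OF fk]) (simp add: Suc[rule_format])
      then show "CK k (\<lambda>w. (T w ^^ Suc m) (\<lambda>c. 0) c)"
        unfolding T_def using CK_diffop[OF CK_nth] by simp
    qed
  qed
  have "smooth_map H"
    unfolding smooth_map_def smooth_fun_CK H_def using iterk by simp
  then show ?thesis using inj surj invF by (simp add: bij_def)
qed

context tri
begin

lemma geo_unique:
  assumes I: "is_interval I" "t0 \<in> I"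
    and gm: "\<And>t. t \<in> I \<Longrightarrow> (\<gamma> has_vector_derivative \<gamma>1 t) (at t) \<and> (\<gamma>1 has_vector_derivative \<gamma>2 t) (at t) \<and>
        (\<forall>c. \<gamma>2 t $ c + Gs c (\<gamma> t) (\<gamma>1 t) = 0)"
    and dl: "\<And>t. t \<in> I \<Longrightarrow> (\<delta> has_vector_derivative \<delta>1 t) (at t) \<and> (\<delta>1 has_vector_derivative \<delta>2 t) (at t) \<and>
        (\<forall>c. \<delta>2 t $ c + Gs c (\<delta> t) (\<delta>1 t) = 0)"
    and i0: "\<gamma> t0 = \<delta> t0" "\<gamma>1 t0 = \<delta>1 t0"
  shows "\<forall>t\<in>I. \<gamma> t = \<delta> t"
proof -
  have cvx: "convex I" using I(1) by (rule is_interval_convex)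
  have zero: "\<forall>t\<in>I. F t = 0"
    if d: "\<And>t. t \<in> I \<Longrightarrow> (F has_real_derivative 0) (at t)" and F0: "F t0 = 0" for F
  proof -
    have "\<exists>C. \<forall>t\<in>I. F t = C"
      by (rule has_field_derivative_zero_constant[OF cvx]) (rule has_field_derivative_at_within[OF d])
    then obtain C where "\<forall>t\<in>I. F t = C" by blast
    with F0 I(2) show ?thesis by auto
  qed
  have claim: "\<forall>t\<in>I. \<gamma> t $ c = \<delta> t $ c \<and> \<gamma>1 t $ c = \<delta>1 t $ c" for c
  proof (induction c rule: lin_induct)
    case (1 c)
    have e2: "\<gamma>2 t $ c = \<delta>2 t $ c" if t: "t \<in> I" for t
    proof -
      have "Gs c (\<gamma> t) (\<gamma>1 t) = Gs c (\<delta> t) (\<delta>1 t)"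
        by (rule Gs_loc) (use 1 t in blast)
      then show ?thesis using gm[OF t] dl[OF t] by (metis add_right_cancel)
    qed
    have d1: "((\<lambda>t. \<gamma>1 t $ c - \<delta>1 t $ c) has_real_derivative 0) (at t)" if t: "t \<in> I" for t
      using DERIV_diff[OF vec_deriv_comp[of \<gamma>1 "\<gamma>2 t" t c] vec_deriv_comp[of \<delta>1 "\<delta>2 t" t c]]
        gm[OF t] dl[OF t] e2[OF t] by simp
    have F1: "\<gamma>1 t0 $ c - \<delta>1 t0 $ c = 0" using i0(2) by simp
    have z1: "\<forall>t\<in>I. \<gamma>1 t $ c - \<delta>1 t $ c = 0"
      using zero[of "\<lambda>t. \<gamma>1 t $ c - \<delta>1 t $ c", OF d1 F1] by simp
    have d0: "((\<lambda>t. \<gamma> t $ c - \<delta> t $ c) has_real_derivative 0) (at t)" if t: "t \<in> I" for t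
      using DERIV_diff[OF vec_deriv_comp[of \<gamma> "\<gamma>1 t" t c] vec_deriv_comp[of \<delta> "\<delta>1 t" t c]]
        gm[OF t] dl[OF t] z1 t by simp
    have F0: "\<gamma> t0 $ c - \<delta> t0 $ c = 0" using i0(1) by simp
    have z0: "\<forall>t\<in>I. \<gamma> t $ c - \<delta> t $ c = 0"
      using zero[of "\<lambda>t. \<gamma> t $ c - \<delta> t $ c", OF d0 F0] by simp
    show ?case using z0 z1 by simp
  qed
  show ?thesis using claim by (simp add: vec_eq_iff)
qed

lemma geodesic_Gs:
  assumes "is_geodesic g I \<gamma>"
  obtains \<gamma>1 \<gamma>2 where "open I" "is_interval I"
    "\<And>t. t \<in> I \<Longrightarrow> (\<gamma> has_vector_derivative \<gamma>1 t) (at t) \<and> (\<gamma>1 has_vector_derivative \<gamma>2 t) (at t) \<and>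
        (\<forall>c. \<gamma>2 t $ c + Gs c (\<gamma> t) (\<gamma>1 t) = 0)"
proof -
  from assms obtain \<gamma>1 \<gamma>2 where o: "open I" and iv: "is_interval I" and h: "\<forall>t\<in>I. (\<gamma> has_vector_derivative \<gamma>1 t) (at t) \<and> (\<gamma>1 has_vector_derivative \<gamma>2 t) (at t) \<and>
        (\<forall>c. \<gamma>2 t $ c + (\<Sum>a\<in>UNIV. \<Sum>b\<in>UNIV. christoffel g c a b (\<gamma> t) * \<gamma>1 t $ a * \<gamma>1 t $ b) = 0)"
    unfolding is_geodesic_def by blast
  have h': "\<And>t. t \<in> I \<Longrightarrow> (\<gamma> has_vector_derivative \<gamma>1 t) (at t) \<and> (\<gamma>1 has_vector_derivative \<gamma>2 t) (at t) \<and>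
        (\<forall>c. \<gamma>2 t $ c + Gs c (\<gamma> t) (\<gamma>1 t) = 0)" using h by (simp add: Gs_def)
  show thesis by (rule that[of \<gamma>1 \<gamma>2, OF o iv h'])
qed

lemma gam_props: "(gam P v has_vector_derivative gam1 P v t) (at t) \<and> (gam1 P v has_vector_derivative gam2 P v t) (at t) \<and>
        (\<forall>c. gam2 P v t $ c + Gs c (gam P v t) (gam1 P v t) = 0)"
  using gam_deriv gam1_deriv gam_eq by blast

lemma complete: "geodesically_complete g"
  unfolding geodesically_complete_def
proof (intro allI impI)
  fix I \<gamma> assume geo: "is_geodesic g I \<gamma>"
  then obtain \<gamma>1 \<gamma>2 where I: "open I" "is_interval I"
    and gm: "\<And>t. t \<in> I \<Longrightarrow> (\<gamma> has_vector_derivative \<gamma>1 t) (at t) \<and> (\<gamma>1 has_vector_derivative \<gamma>2 t) (at t) \<and>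
        (\<forall>c. \<gamma>2 t $ c + Gs c (\<gamma> t) (\<gamma>1 t) = 0)"
    by (rule geodesic_Gs) blast
  show "\<exists>\<delta>. is_geodesic g UNIV \<delta> \<and> (\<forall>t\<in>I. \<delta> t = \<gamma> t)"
  proof (cases "I = {}")
    case True
    then show ?thesis using gam_geodesic by (intro exI[of _ "gam 0 0"]) simp
  next
    case False
    then obtain t0 where t0: "t0 \<in> I" by blast
    define P where "P = \<gamma> t0"
    define v where "v = \<gamma>1 t0"
    define \<delta> where "\<delta> t = gam P v (t - t0)" for t
    define \<delta>1 where "\<delta>1 t = gam1 P v (t - t0)" for t
    define \<delta>2 where "\<delta>2 t = gam2 P v (t - t0)" for t
    have shift: "((\<lambda>t. F (t - t0)) has_vector_derivative D (t - t0)) (at t)"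
      if "\<And>s. (F has_vector_derivative D s) (at s)" for F :: "real \<Rightarrow> (real, 'n) vec" and D t
    proof -
      have "((\<lambda>t. t - t0) has_vector_derivative 1) (at t)"
        using DERIV_diff[OF DERIV_ident DERIV_const[of t0]]
        by (simp add: has_real_derivative_iff_has_vector_derivative)
      from vector_diff_chain_at[OF this that[of "t - t0"]] show ?thesis by (simp add: o_def)
    qed
    have dl: "(\<delta> has_vector_derivative \<delta>1 t) (at t) \<and> (\<delta>1 has_vector_derivative \<delta>2 t) (at t) \<and>
        (\<forall>c. \<delta>2 t $ c + Gs c (\<delta> t) (\<delta>1 t) = 0)" for t
      unfolding \<delta>_def \<delta>1_def \<delta>2_def
      using shift[of "gam P v" "gam1 P v" t] shift[of "gam1 P v" "gam2 P v" t] gam_props by blast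
    have geoU: "is_geodesic g UNIV \<delta>"
      unfolding is_geodesic_def
      apply (intro conjI open_UNIV is_interval_univ)
      apply (rule exI[of _ \<delta>1], rule exI[of _ \<delta>2])
      using dl by (simp add: Gs_def)
    have "\<forall>t\<in>I. \<gamma> t = \<delta> t"
      by (rule geo_unique[OF I(2) t0 gm dl]) (simp_all add: \<delta>_def \<delta>1_def P_def v_def gam_0 gam1_0)
    then show ?thesis using geoU by (intro exI[of _ \<delta>]) simp
  qed
qed

lemma exp_eq: "exp_map g P v = gam P v 1"
  unfolding exp_map_def
proof (rule the_equality)
  show "\<exists>I \<gamma>. {0..1} \<subseteq> I \<and> is_geodesic g I \<gamma> \<and> \<gamma> 0 = P \<and> vector_derivative \<gamma> (at 0) = v \<and> \<gamma> 1 = gam P v 1"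
  proof (rule exI[of _ UNIV], rule exI[of _ "gam P v"], intro conjI)
    show "vector_derivative (gam P v) (at 0) = v"
      using vector_derivative_at[OF gam_deriv[of P v 0]] gam1_0[of P v] by simp
  qed (simp_all add: gam_geodesic gam_0)
next
  fix q assume "\<exists>I \<gamma>. {0..1} \<subseteq> I \<and> is_geodesic g I \<gamma> \<and> \<gamma> 0 = P \<and> vector_derivative \<gamma> (at 0) = v \<and> \<gamma> 1 = q"
  then obtain I \<gamma> where sub: "{0..1} \<subseteq> I" and geo: "is_geodesic g I \<gamma>" and g0: "\<gamma> 0 = P"
    and vd: "vector_derivative \<gamma> (at 0) = v" and q: "\<gamma> 1 = q" by blast
  obtain \<gamma>1 \<gamma>2 where I: "open I" "is_interval I"
    and gm: "\<And>t. t \<in> I \<Longrightarrow> (\<gamma> has_vector_derivative \<gamma>1 t) (at t) \<and> (\<gamma>1 has_vector_derivative \<gamma>2 t) (at t) \<and>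
        (\<forall>c. \<gamma>2 t $ c + Gs c (\<gamma> t) (\<gamma>1 t) = 0)"
    using geo by (rule geodesic_Gs) blast
  have i0: "0 \<in> I" and i1: "1 \<in> I" using sub by auto
  have "vector_derivative \<gamma> (at 0) = \<gamma>1 0"
    by (rule vector_derivative_at) (use gm[OF i0] in blast)
  then have "\<gamma>1 0 = v" using vd by simp
  then have "\<forall>t\<in>I. \<gamma> t = gam P v t"
    by (intro geo_unique[OF I(2) i0 gm gam_props]) (simp_all add: g0 gam_0 gam1_0)
  then show "q = gam P v 1" using q i1 by simp
qed

lemma Sol_dep:
  "\<forall>v v'. (\<forall>j. j < c \<longrightarrow> v $ j = v' $ j) \<longrightarrow>
     (\<forall>t. fst (Sol P v c) t - t * v $ c = fst (Sol P v' c) t - t * v' $ c \<and>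
          snd (Sol P v c) t - v $ c = snd (Sol P v' c) t - v' $ c)"
proof (induction c rule: lin_induct)
  case (1 c)
  show ?case
  proof (intro allI impI)
    fix v v' :: "(real, 'n) vec" and t :: real
    assume agree: "\<forall>j. j < c \<longrightarrow> v $ j = v' $ j"
    have same: "fst (Sol P v j) s = fst (Sol P v' j) s \<and> snd (Sol P v j) s = snd (Sol P v' j) s"
      if j: "j < c" for j s
    proof -
      have "\<forall>i. i < j \<longrightarrow> v $ i = v' $ i" using agree j by auto
      then have "fst (Sol P v j) s - s * v $ j = fst (Sol P v' j) s - s * v' $ j \<and>
          snd (Sol P v j) s - v $ j = snd (Sol P v' j) s - v' $ j"
        using 1[OF j] by blast
      moreover have "v $ j = v' $ j" using agree j by blast
      ultimately show ?thesis by simp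
    qed
    have GUe: "GU (Sol P v) c = GU (Sol P v') c"
      unfolding GU_def by (rule ext) (rule Gs_loc, simp add: same)
    have s2: "snd (Sol P w c) = (\<lambda>t. w $ c - OI (GU (Sol P w) c) t)" for w
      by (subst Sol_c) (simp add: TT_def)
    have s1: "fst (Sol P w c) t = P $ c + (t * w $ c - OI (OI (GU (Sol P w) c)) t)" for w
    proof -
      have "fst (Sol P w c) t = P $ c + OI (\<lambda>s. w $ c - OI (GU (Sol P w) c) s) t"
        by (subst Sol_c) (simp add: TT_def)
      also have "\<dots> = P $ c + (t * w $ c - OI (OI (GU (Sol P w) c)) t)"
        by (simp add: OI_const_minus[OF OI_cont[OF GU_Sol_cont]])
      finally show ?thesis .
    qed
    show "fst (Sol P v c) t - t * v $ c = fst (Sol P v' c) t - t * v' $ c \<and>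
          snd (Sol P v c) t - v $ c = snd (Sol P v' c) t - v' $ c"
      using s1[of v] s1[of v'] s2[of v] s2[of v'] GUe by simp
  qed
qed

lemma CK_exp_comp: "CK k (\<lambda>v. fst (Sol P v c) 1)"
proof -
  have "CK k (\<lambda>v::(real, 'n) vec. (\<lambda>p. fst (Sol P (fst p) c) (snd p)) (v, 1::real))"
  proof (rule CK_comp[OF Sol_CK1])
    fix j :: "(real, 'n) vec \<times> real" assume "j \<in> Basis"
    then show "CK k (\<lambda>v. (v, 1::real) \<bullet> j)"
    proof (cases rule: Basis_prod_cases)
      case (1 i) then show ?thesis by (simp add: CK_inner)
    next
      case (2 i) then show ?thesis by (simp add: CK_const)
    qed
  qed
  then show ?thesis by simp
qed

lemma exp_diffeo: "diffeomorphism (exp_map g P)"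
proof -
  have E: "exp_map g P = (\<lambda>v. gam P v 1)" by (rule ext) (rule exp_eq)
  define f where "f c v = fst (Sol P v c) 1 - v $ c" for c v
  have Fe: "gam P v 1 $ c = v $ c + f c v" for v c by (simp add: gam_def f_def)
  have fdep: "f c v = f c v'" if "\<forall>j. j < c \<longrightarrow> v $ j = v' $ j" for c v v'
  proof -
    have "fst (Sol P v c) 1 - 1 * v $ c = fst (Sol P v' c) 1 - 1 * v' $ c"
      using Sol_dep[of c P] that by blast
    then show ?thesis unfolding f_def by simp
  qed
  have fk: "CK k (f c)" for c k
    unfolding f_def by (rule CK_diffop[OF CK_exp_comp CK_nth])
  have bi: "bij (\<lambda>v. gam P v 1) \<and> smooth_map (inv (\<lambda>v. gam P v 1))"
    by (rule tri_inverse[OF Fe fdep fk])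
  have sm: "smooth_map (\<lambda>v. gam P v 1)"
    unfolding smooth_map_def smooth_fun_CK by (simp add: gam_def CK_exp_comp)
  show ?thesis unfolding diffeomorphism_def E using bi sm by simp
qed

end

theorem lemma2p1:
  fixes g :: "real^('n::{finite,linorder}) \<Rightarrow> real^('n::{finite,linorder})^('n::{finite,linorder})"
  assumes metric: "pseudo_riemannian_metric g"
    and triangular: "\<And>a b c z. christoffel g c a b z \<noteq> 0 \<Longrightarrow> a < c \<and> b < c"
    and dep: "\<And>a b c z w. (\<forall>j. j < c \<longrightarrow> z $ j = w $ j) \<Longrightarrow>
                christoffel g c a b z = christoffel g c a b w"
  shows "geodesically_complete g \<and> (\<forall>P. diffeomorphism (exp_map g P))"
proof -
  interpret tri g by (rule tri.intro[OF metric triangular dep])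
  show ?thesis using complete exp_diffeo by blast
qed

end
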